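(* Let $O$ be an oracle and, for $y\in\{1,\dots,N\}$, let $A^O_y$ be an $l$-qubit oracular algorithm making $k$ queries to $O$; let $\gamma^y\in\{0,1\}^l$, let $S_0=\mathcal{I}-2|0^l\rangle\langle0^l|$ and $M_{\gamma^y}=\mathcal{I}-2|\gamma^y\rangle\langle\gamma^y|$, and let $G_y=-A^O_yS_0A_y^{O\dagger}M_{\gamma^y}$. Then the operator $$W=\sum_y|y\rangle\langle y|\otimes\sum_{x\in\{0,1\}^m}|x\rangle\langle x|\otimes G_y^x,$$ where $m$ is the size of the middle register and $G_y^x$ denotes $G_y$ applied $x$ times (with $x$ read as an integer), can be implemented using $O(k2^m)$ calls to $O$.
   Context: The oracle $O$ may be used in controlled form; operations not involving $O$ are free for the purpose of counting queries. *)

theory Defs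
  imports "Jordan_Normal_Form.Matrix" "HOL.Complex"
begin

definition adj :: "complex mat \<Rightarrow> complex mat" where
  "adj A = mat (dim_col A) (dim_row A) (\<lambda>(i,j). cnj (A $$ (j,i)))"

definition unitary :: "nat \<Rightarrow> complex mat \<Rightarrow> bool" where
  "unitary n U \<longleftrightarrow> U \<in> carrier_mat n n \<and> adj U * U = 1\<^sub>m n \<and> U * adj U = 1\<^sub>m n"

(* Kronecker (tensor) product; first factor is the more significant index. *)
definition kron :: "complex mat \<Rightarrow> complex mat \<Rightarrow> complex mat" where
  "kron A B = mat (dim_row A * dim_row B) (dim_col A * dim_col B)
     (\<lambda>(i,j). A $$ (i div dim_row B, j div dim_col B) * B $$ (i mod dim_row B, j mod dim_col B))"

definition proj :: "nat \<Rightarrow> nat \<Rightarrow> complex mat" where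
  "proj n j = mat n n (\<lambda>(a,b). if a = j \<and> b = j then 1 else 0)"

definition ket0 :: "nat \<Rightarrow> complex mat" where
  "ket0 n = mat n 1 (\<lambda>(a,b). if a = 0 then 1 else 0)"

definition msum :: "nat \<Rightarrow> complex mat list \<Rightarrow> complex mat" where
  "msum n Ms = foldr (+) Ms (0\<^sub>m n n)"

(* ---------- Oracular algorithm A^Or on l qubits making k queries ----------
   The oracle Or is a unitary on q qubits (q \<le> l); a query applies Or to the
   first q qubits, i.e. the gate  Or \<otimes> I.  The algorithm is
   A^Or = U_k (Or\<otimes>I) U_{k-1} ... (Or\<otimes>I) U_0  with Or-independent unitaries U_i.
   (Queries on other qubits are absorbed into the U_i by wire permutations.) *)
fun alg :: "nat \<Rightarrow> nat \<Rightarrow> (nat \<Rightarrow> complex mat) \<Rightarrow> complex mat \<Rightarrow> nat \<Rightarrow> complex mat" where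
  "alg l q U Or 0 = U 0"
| "alg l q U Or (Suc i) = U (Suc i) * kron Or (1\<^sub>m (2^l div 2^q)) * alg l q U Or i"

(* S_0 = I - 2|0^l><0^l| ,  M_gamma = I - 2|gamma><gamma|  (gamma as index < 2^l) *)
definition S0 :: "nat \<Rightarrow> complex mat" where
  "S0 l = 1\<^sub>m (2^l) - 2 \<cdot>\<^sub>m proj (2^l) 0"

definition Mgam :: "nat \<Rightarrow> nat \<Rightarrow> complex mat" where
  "Mgam l g = 1\<^sub>m (2^l) - 2 \<cdot>\<^sub>m proj (2^l) g"

definition Gop :: "nat \<Rightarrow> complex mat \<Rightarrow> nat \<Rightarrow> complex mat" where
  "Gop l A g = (-1) \<cdot>\<^sub>m (A * S0 l * adj A * Mgam l g)"

(* W = sum_{y=1..N} |y><y| \<otimes> sum_{x<2^m} |x><x| \<otimes> G_y^x ;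
   register state |y> (y in 1..N) is basis index y-1 of an N-dim register. *)
definition Wop :: "nat \<Rightarrow> nat \<Rightarrow> nat \<Rightarrow> (nat \<Rightarrow> complex mat) \<Rightarrow> complex mat" where
  "Wop N m l G = msum (N * 2^m * 2^l)
     (map (\<lambda>y. msum (N * 2^m * 2^l)
        (map (\<lambda>x. kron (proj N (y - 1)) (kron (proj (2^m) x) (G y ^\<^sub>m x))) [0..<2^m])) [1..<N+1])"

(* ---------- Circuits with oracle calls ----------
   An oracle gate on a D-dimensional space is Or or Or^dagger (flag dag) applied to
   the first q qubits, optionally controlled by the most significant qubit (flag ctrl):
     uncontrolled:  Ob \<otimes> I ;   controlled: |0><0| \<otimes> I + |1><1| \<otimes> Ob \<otimes> I. *)
definition qgate :: "nat \<Rightarrow> nat \<Rightarrow> complex mat \<Rightarrow> bool \<times> bool \<Rightarrow> complex mat" where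
  "qgate D q Or f = (let Ob = (if fst f then adj Or else Or) in
     if snd f then kron (proj 2 0) (1\<^sub>m (D div 2)) + kron (proj 2 1) (kron Ob (1\<^sub>m (D div (2 * 2^q))))
     else kron Ob (1\<^sub>m (D div 2^q)))"

fun circ :: "nat \<Rightarrow> nat \<Rightarrow> (nat \<Rightarrow> complex mat) \<Rightarrow> (nat \<Rightarrow> bool \<times> bool) \<Rightarrow> complex mat \<Rightarrow> nat \<Rightarrow> complex mat" where
  "circ D q V Q Or 0 = V 0"
| "circ D q V Q Or (Suc i) = V (Suc i) * qgate D q Or (Q (Suc i)) * circ D q V Q Or i"

end

theory Submission
  imports Defs "Jordan_Normal_Form.Determinant"
begin

lemma mult_entry: "A \<in> carrier_mat n p \<Longrightarrow> B \<in> carrier_mat p r \<Longrightarrow> i<n \<Longrightarrow> j<r \<Longrightarrow>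
  (A*B)$$(i,j) = (\<Sum>s<p. A$$(i,s) * B$$(s,j))"
  by (simp add: scalar_prod_def atLeast0LessThan)

lemma adj_carrier[simp]: "dim_row (adj A) = dim_col A" "dim_col (adj A) = dim_row A"
  by (auto simp: adj_def)
lemma adj_carrier_mat[simp]: "A \<in> carrier_mat n m \<Longrightarrow> adj A \<in> carrier_mat m n"
  unfolding carrier_mat_def by simp
lemma adj_index[simp]: "i < dim_col A \<Longrightarrow> j < dim_row A \<Longrightarrow> adj A $$ (i,j) = cnj (A $$ (j,i))"
  by (auto simp: adj_def)
lemma adj_adj[simp]: "adj (adj A) = A"
  by (rule eq_matI) auto
lemma adj_one[simp]: "adj (1\<^sub>m n) = 1\<^sub>m n"
  by (rule eq_matI) auto
lemma adj_mult: assumes "A \<in> carrier_mat n p" "B \<in> carrier_mat p r"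
  shows "adj (A*B) = adj B * adj A"
proof (rule eq_matI)
  fix i j assume "i < dim_row (adj B * adj A)" "j < dim_col (adj B * adj A)"
  then have ij: "i < r" "j < n" using assms by auto
  have "adj (A*B) $$ (i,j) = cnj ((A*B) $$ (j,i))" using ij assms by simp
  also have "\<dots> = (\<Sum>s<p. cnj (A$$(j,s)) * cnj (B$$(s,i)))"
    using ij assms by (subst mult_entry[OF assms]) (auto simp: cnj_sum)
  also have "\<dots> = (adj B * adj A) $$ (i,j)"
    using ij assms by (subst mult_entry[of _ r p _ n]) (auto simp: mult.commute)
  finally show "adj (A*B) $$ (i,j) = (adj B * adj A) $$ (i,j)" .
qed (use assms in auto)

lemma unitary_carrier: "unitary n A \<Longrightarrow> A \<in> carrier_mat n n" by (simp add: unitary_def)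

lemma unitaryI: assumes "A \<in> carrier_mat n n" "adj A * A = 1\<^sub>m n" shows "unitary n A"
  using assms mat_mult_left_right_inverse[of "adj A" n A] unfolding unitary_def by auto

lemma unitary_mult: assumes "unitary n A" "unitary n B" shows "unitary n (A*B)"
proof (rule unitaryI)
  have c: "A \<in> carrier_mat n n" "B \<in> carrier_mat n n" "adj A \<in> carrier_mat n n" "adj B \<in> carrier_mat n n"
    using assms unitary_carrier by auto
  show "A * B \<in> carrier_mat n n" using c by auto
  have "adj (A*B) * (A*B) = adj B * (adj A * (A * B))" using c by (simp add: adj_mult assoc_mult_mat[of "adj B" n n "adj A" n "A*B" n])
  also have "\<dots> = adj B * ((adj A * A) * B)" using c by (simp add: assoc_mult_mat[of "adj A" n n A n B n])
  also have "\<dots> = 1\<^sub>m n" using assms c unfolding unitary_def by simp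
  finally show "adj (A*B) * (A*B) = 1\<^sub>m n" .
qed

lemma unitary_one: "unitary n (1\<^sub>m n)" by (auto simp: unitary_def)
lemma unitary_adj: "unitary n A \<Longrightarrow> unitary n (adj A)" by (auto simp: unitary_def)
lemma unitary_AadjA: "unitary n A \<Longrightarrow> A * adj A = 1\<^sub>m n" by (auto simp: unitary_def)

definition dm :: "nat \<Rightarrow> (nat \<Rightarrow> complex) \<Rightarrow> complex mat" where
  "dm n d = mat n n (\<lambda>(i,j). if i = j then d i else 0)"

lemma unitary_dm: assumes "\<And>i. cnj (d i) * d i = 1" shows "unitary n (dm n d)"
proof (rule unitaryI)
  show "dm n d \<in> carrier_mat n n" by (simp add: dm_def)
  show "adj (dm n d) * dm n d = 1\<^sub>m n"
  proof (rule eq_matI)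
    fix i j assume "i < dim_row (1\<^sub>m n)" "j < dim_col (1\<^sub>m n)"
    then have ij: "i<n" "j<n" by auto
    have "(adj (dm n d) * dm n d) $$ (i,j) = (\<Sum>s<n. (if s = i then cnj (d i) else 0) * (if s = j then d j else 0))"
      by (subst mult_entry[of _ n n _ n]) (auto simp: dm_def ij intro!: sum.cong)
    also have "\<dots> = (\<Sum>s<n. if s = i \<and> s = j then cnj (d i) * d j else 0)"
      by (rule sum.cong) auto
    also have "\<dots> = 1\<^sub>m n $$ (i,j)" using ij assms
      by (cases "i = j") (auto simp: sum.delta intro!: sum.neutral)
    finally show "(adj (dm n d) * dm n d) $$ (i,j) = 1\<^sub>m n $$ (i,j)" .
  qed (auto simp: dm_def)
qed

lemma one_dm: "1\<^sub>m n = dm n (\<lambda>_. 1)"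
  by (rule eq_matI) (auto simp: dm_def)

lemma Mgam_dm: "Mgam l g = dm (2^l) (\<lambda>i. if i = g then -1 else 1)"
  by (rule eq_matI) (auto simp: dm_def Mgam_def proj_def)

lemma S0_dm: "S0 l = Mgam l 0" by (simp add: S0_def Mgam_def)

lemma negS0_dm: "(-1) \<cdot>\<^sub>m S0 l = dm (2^l) (\<lambda>i. if i = 0 then 1 else -1)"
  by (rule eq_matI) (auto simp: dm_def S0_def proj_def)


lemma sum_split: "(\<Sum>s<a*b. f s) = (\<Sum>u<a. \<Sum>v<b. f (u*b+v::nat))"
proof (induction a)
  case 0 then show ?case by simp
next
  case (Suc a)
  have "{..<Suc a * b} = {..<a*b} \<union> {a*b..<a*b+b}" by auto
  then have "(\<Sum>s<Suc a*b. f s) = (\<Sum>s<a*b. f s) + (\<Sum>s\<in>{a*b..<a*b+b}. f s)"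
    by (simp add: sum.union_disjoint ivl_disj_int)
  also have "(\<Sum>s\<in>{a*b..<a*b+b}. f s) = (\<Sum>v<b. f (a*b+v))"
    using sum.shift_bounds_nat_ivl[of f 0 "a*b" b]
    by (simp add: atLeast0LessThan add.commute)
  finally show ?case using Suc by simp
qed

lemma kron_dim[simp]: "dim_row (kron A B) = dim_row A * dim_row B" "dim_col (kron A B) = dim_col A * dim_col B"
  by (auto simp: kron_def)

lemma kron_carrier[simp]: "A \<in> carrier_mat a b \<Longrightarrow> B \<in> carrier_mat c d \<Longrightarrow> kron A B \<in> carrier_mat (a*c) (b*d)"
  unfolding carrier_mat_def by simp

lemma kron_index: "i < dim_row A * dim_row B \<Longrightarrow> j < dim_col A * dim_col B \<Longrightarrow>
  kron A B $$ (i,j) = A $$ (i div dim_row B, j div dim_col B) * B $$ (i mod dim_row B, j mod dim_col B)"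
  by (simp add: kron_def)

lemma kron_mult: assumes A: "A \<in> carrier_mat ar ac" and B: "B \<in> carrier_mat br bc"
  and C: "C \<in> carrier_mat ac cc" and D: "D \<in> carrier_mat bc dc"
  shows "kron A B * kron C D = kron (A*C) (B*D)"
proof (rule eq_matI)
  fix i j assume "i < dim_row (kron (A*C) (B*D))" "j < dim_col (kron (A*C) (B*D))"
  then have ij: "i < ar*br" "j < cc*dc" using A B C D by auto
  then have br: "br > 0" and dc: "dc > 0" by (auto intro: gr0I)
  have i1: "i div br < ar" "i mod br < br" "j div dc < cc" "j mod dc < dc"
    using ij br dc by (auto simp: less_mult_imp_div_less)
  have "(kron A B * kron C D) $$ (i,j) = (\<Sum>s<ac*bc. kron A B $$ (i,s) * kron C D $$ (s,j))"
    using ij A B C D by (subst mult_entry[of _ "ar*br" "ac*bc" _ "cc*dc"]) auto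
  also have "\<dots> = (\<Sum>u<ac. \<Sum>v<bc. kron A B $$ (i,u*bc+v) * kron C D $$ (u*bc+v,j))"
    by (rule sum_split)
  also have "\<dots> = (\<Sum>u<ac. \<Sum>v<bc. (A $$ (i div br, u) * C $$ (u, j div dc)) * (B $$ (i mod br, v) * D $$ (v, j mod dc)))"
  proof (intro sum.cong refl)
    fix u v assume uv: "u \<in> {..<ac}" "v \<in> {..<bc}"
    have "u*bc+v < (u+1)*bc" using uv by simp
    also have "\<dots> \<le> ac*bc" using uv by (intro mult_le_mono1) simp
    finally have "u*bc+v < ac*bc" .
    then show "kron A B $$ (i,u*bc+v) * kron C D $$ (u*bc+v,j) = (A $$ (i div br, u) * C $$ (u, j div dc)) * (B $$ (i mod br, v) * D $$ (v, j mod dc))"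
      using uv ij A B C D by (simp add: kron_index mult_ac)
  qed
  also have "\<dots> = (A*C) $$ (i div br, j div dc) * (B*D) $$ (i mod br, j mod dc)"
  proof -
    have e1: "(A*C)$$(i div br, j div dc) = (\<Sum>u<ac. A$$(i div br,u)*C$$(u,j div dc))"
      by (rule mult_entry[OF A C]) (use i1 in auto)
    have e2: "(B*D)$$(i mod br, j mod dc) = (\<Sum>v<bc. B$$(i mod br,v)*D$$(v,j mod dc))"
      by (rule mult_entry[OF B D]) (use i1 in auto)
    show ?thesis by (simp only: e1 e2 sum_product)
  qed
  also have "\<dots> = kron (A*C) (B*D) $$ (i,j)"
    using ij A B C D by (simp add: kron_index)
  finally show "(kron A B * kron C D) $$ (i,j) = kron (A*C) (B*D) $$ (i,j)" .
qed (use A B C D in auto)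

lemma adj_kron: "adj (kron A B) = kron (adj A) (adj B)"
proof (rule eq_matI)
  fix i j assume ij: "i < dim_row (kron (adj A) (adj B))" "j < dim_col (kron (adj A) (adj B))"
  then have "dim_col B > 0" "dim_row B > 0" by (auto intro: gr0I)
  then show "adj (kron A B) $$ (i, j) = kron (adj A) (adj B) $$ (i, j)"
    using ij by (auto simp: kron_index less_mult_imp_div_less)
qed auto

lemma kron_one_one: "kron (1\<^sub>m a) (1\<^sub>m b) = 1\<^sub>m (a*b)"
proof (rule eq_matI)
  fix i j assume "i < dim_row (1\<^sub>m (a*b))" "j < dim_col (1\<^sub>m (a*b))"
  then have ij: "i < a*b" "j < a*b" by auto
  then have "b > 0" by (auto intro: gr0I)
  then have "(i div b = j div b \<and> i mod b = j mod b) = (i = j)"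
    by (metis div_mult_mod_eq)
  then show "kron (1\<^sub>m a) (1\<^sub>m b) $$ (i,j) = 1\<^sub>m (a*b) $$ (i,j)"
    using ij \<open>b>0\<close> by (auto simp: kron_index less_mult_imp_div_less)
qed auto

lemma unitary_kron: assumes "unitary a A" "unitary b B" shows "unitary (a*b) (kron A B)"
proof (rule unitaryI)
  have c: "A \<in> carrier_mat a a" "B \<in> carrier_mat b b" using assms unitary_carrier by auto
  show "kron A B \<in> carrier_mat (a*b) (a*b)" using c by simp
  have "adj (kron A B) * kron A B = kron (adj A * A) (adj B * B)"
    using c by (simp add: adj_kron kron_mult[of _ a a _ b b _ a _ b])
  then show "adj (kron A B) * kron A B = 1\<^sub>m (a*b)" using assms by (simp add: unitary_def kron_one_one)
qed

lemma kron_ket0_1: "kron A (ket0 1) = A"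
  by (rule eq_matI) (auto simp: kron_index ket0_def)


definition BD :: "nat \<Rightarrow> nat \<Rightarrow> (nat \<Rightarrow> complex mat) \<Rightarrow> complex mat" where
  "BD K L F = mat (K*L) (K*L) (\<lambda>(i,j). if i div L = j div L then F (i div L) $$ (i mod L, j mod L) else 0)"

lemma BD_carrier[simp]: "BD K L F \<in> carrier_mat (K*L) (K*L)"
  by (simp add: BD_def)
lemma BD_dim[simp]: "dim_row (BD K L F) = K*L" "dim_col (BD K L F) = K*L"
  by (simp_all add: BD_def)

lemma BD_index: "i < K*L \<Longrightarrow> j < K*L \<Longrightarrow> BD K L F $$ (i,j) = (if i div L = j div L then F (i div L) $$ (i mod L, j mod L) else 0)"
  by (simp add: BD_def)

lemma BD_mult: assumes F: "\<And>c. c < K \<Longrightarrow> F c \<in> carrier_mat L L" and G: "\<And>c. c < K \<Longrightarrow> G c \<in> carrier_mat L L"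
  shows "BD K L F * BD K L G = BD K L (\<lambda>c. F c * G c)"
proof (rule eq_matI)
  fix i j assume "i < dim_row (BD K L (\<lambda>c. F c * G c))" "j < dim_col (BD K L (\<lambda>c. F c * G c))"
  then have ij: "i < K*L" "j < K*L" by auto
  then have L: "L > 0" by (auto intro: gr0I)
  have i1: "i div L < K" "i mod L < L" "j div L < K" "j mod L < L" using ij L by (auto simp: less_mult_imp_div_less)
  have "(BD K L F * BD K L G) $$ (i,j) = (\<Sum>s<K*L. BD K L F $$ (i,s) * BD K L G $$ (s,j))"
    using ij by (subst mult_entry[of _ "K*L" "K*L" _ "K*L"]) auto
  also have "\<dots> = (\<Sum>u<K. \<Sum>v<L. BD K L F $$ (i,u*L+v) * BD K L G $$ (u*L+v,j))"
    by (rule sum_split)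
  also have "\<dots> = (\<Sum>u<K. if u = i div L then (if i div L = j div L then
        (\<Sum>v<L. F (i div L) $$ (i mod L, v) * G (i div L) $$ (v, j mod L)) else 0) else 0)"
  proof (intro sum.cong refl)
    fix u assume u: "u \<in> {..<K}"
    have "(\<Sum>v<L. BD K L F $$ (i,u*L+v) * BD K L G $$ (u*L+v,j)) =
      (\<Sum>v<L. if u = i div L then (if i div L = j div L then
         F (i div L) $$ (i mod L, v) * G (i div L) $$ (v, j mod L) else 0) else 0)"
    proof (intro sum.cong refl)
      fix v assume v: "v \<in> {..<L}"
      have "u*L+v < (u+1)*L" using v by simp
      also have "\<dots> \<le> K*L" using u by (intro mult_le_mono1) simp
      finally have "u*L+v < K*L" .
      then show "BD K L F $$ (i,u*L+v) * BD K L G $$ (u*L+v,j) = (if u = i div L then (if i div L = j div L then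
         F (i div L) $$ (i mod L, v) * G (i div L) $$ (v, j mod L) else 0) else 0)"
        using ij v by (auto simp: BD_index)
    qed
    then show "(\<Sum>v<L. BD K L F $$ (i,u*L+v) * BD K L G $$ (u*L+v,j)) = (if u = i div L then (if i div L = j div L then
        (\<Sum>v<L. F (i div L) $$ (i mod L, v) * G (i div L) $$ (v, j mod L)) else 0) else 0)"
      by simp
  qed
  also have "\<dots> = (if i div L = j div L then
        (\<Sum>v<L. F (i div L) $$ (i mod L, v) * G (i div L) $$ (v, j mod L)) else 0)"
    using i1 by (simp add: sum.delta')
  also have "\<dots> = BD K L (\<lambda>c. F c * G c) $$ (i,j)"
    using ij i1 F G by (simp add: BD_index mult_entry[of _ L L _ L])
  finally show "(BD K L F * BD K L G) $$ (i,j) = BD K L (\<lambda>c. F c * G c) $$ (i,j)" .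
qed auto

lemma adj_BD: assumes F: "\<And>c. c < K \<Longrightarrow> F c \<in> carrier_mat L L"
  shows "adj (BD K L F) = BD K L (\<lambda>c. adj (F c))"
proof (rule eq_matI)
  fix i j assume "i < dim_row (BD K L (\<lambda>c. adj (F c)))" "j < dim_col (BD K L (\<lambda>c. adj (F c)))"
  then have ij: "i < K*L" "j < K*L" by auto
  then have L: "L > 0" by (auto intro: gr0I)
  have i1: "i div L < K" "i mod L < L" "j div L < K" "j mod L < L" using ij L by (auto simp: less_mult_imp_div_less)
  show "adj (BD K L F) $$ (i,j) = BD K L (\<lambda>c. adj (F c)) $$ (i,j)"
    using ij i1 F[OF i1(1)] F[OF i1(3)] by (auto simp: BD_index)
qed auto

lemma BD_one: "BD K L (\<lambda>c. 1\<^sub>m L) = 1\<^sub>m (K*L)"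
proof (rule eq_matI)
  fix i j assume "i < dim_row (1\<^sub>m (K*L))" "j < dim_col (1\<^sub>m (K*L))"
  then have ij: "i < K*L" "j < K*L" by auto
  then have L: "L > 0" by (auto intro: gr0I)
  then have "(i div L = j div L \<and> i mod L = j mod L) = (i = j)"
    by (metis div_mult_mod_eq)
  then show "BD K L (\<lambda>c. 1\<^sub>m L) $$ (i,j) = 1\<^sub>m (K*L) $$ (i,j)"
    using ij L by (auto simp: BD_index)
qed auto

lemma unitary_BD: assumes F: "\<And>c. c < K \<Longrightarrow> unitary L (F c)"
  shows "unitary (K*L) (BD K L F)"
proof (rule unitaryI)
  show "BD K L F \<in> carrier_mat (K * L) (K * L)" by simp
  have c: "\<And>c. c < K \<Longrightarrow> F c \<in> carrier_mat L L" using F unitary_carrier by blast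
  have "adj (BD K L F) * BD K L F = BD K L (\<lambda>c. adj (F c) * F c)"
    using c by (simp add: adj_BD BD_mult)
  also have "\<dots> = BD K L (\<lambda>c. 1\<^sub>m L)"
    unfolding BD_def using F by (intro cong_mat refl) (auto simp: unitary_def less_mult_imp_div_less)
  finally show "adj (BD K L F) * BD K L F = 1\<^sub>m (K*L)" by (simp add: BD_one)
qed


lemma msum_carrier_index: assumes "\<forall>M\<in>set Ms. M \<in> carrier_mat n n"
  shows "msum n Ms \<in> carrier_mat n n \<and> (\<forall>i j. i < n \<longrightarrow> j < n \<longrightarrow> msum n Ms $$ (i,j) = (\<Sum>M\<leftarrow>Ms. M $$ (i,j)))"
  using assms by (induction Ms) (auto simp: msum_def)

lemma div_helper: fixes i L M :: nat shows "i div (M*L) = (i div L) div M" "(i mod (M*L)) div L = (i div L) mod M"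
  "(i mod (M*L)) mod L = i mod L"
proof -
  show "i div (M*L) = (i div L) div M" by (simp add: div_mult2_eq mult.commute)
  show "(i mod (M*L)) mod L = i mod L" by (simp add: mod_mult2_eq mult.commute)
  show "(i mod (M*L)) div L = (i div L) mod M"
  proof (cases "L = 0")
    case False
    have "i mod (M*L) = (i div L mod M) * L + i mod L" by (simp add: mod_mult2_eq mult.commute)
    then show ?thesis using False by simp
  qed simp
qed

lemma proj_carrier[simp]: "proj n j \<in> carrier_mat n n" by (simp add: proj_def)

lemma Wop_BD: assumes G: "\<And>y. y \<in> {1..N} \<Longrightarrow> G y \<in> carrier_mat (2^l) (2^l)"
  shows "Wop N m l G = BD (N*2^m) (2^l) (\<lambda>c. G (c div 2^m + 1) ^\<^sub>m (c mod 2^m))"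
proof -
  let ?L = "2^l :: nat" and ?M = "2^m :: nat"
  define T where "T y x = kron (proj N (y - 1)) (kron (proj ?M x) (G y ^\<^sub>m x))" for y x
  have Tc: "T y x \<in> carrier_mat (N*?M*?L) (N*?M*?L)" if "y \<in> {1..N}" for y x
    using kron_carrier[OF proj_carrier kron_carrier[OF proj_carrier pow_carrier_mat[OF G[OF that]]]]
    unfolding T_def by (simp add: mult.assoc)
  define I where "I y = msum (N*?M*?L) (map (T y) [0..<?M])" for y
  have Ic: "I y \<in> carrier_mat (N*?M*?L) (N*?M*?L) \<and> (\<forall>i j. i < N*?M*?L \<longrightarrow> j < N*?M*?L \<longrightarrow>
      I y $$ (i,j) = (\<Sum>x\<leftarrow>[0..<?M]. T y x $$ (i,j)))" if "y \<in> {1..N}" for y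
  proof -
    have "\<forall>M\<in>set (map (T y) [0..<?M]). M \<in> carrier_mat (N*?M*?L) (N*?M*?L)" using Tc[OF that] by auto
    from msum_carrier_index[OF this] show ?thesis unfolding I_def by (simp add: o_def)
  qed
  have W: "Wop N m l G = msum (N*?M*?L) (map I [1..<N+1])"
    unfolding Wop_def I_def T_def by simp
  have Wc: "Wop N m l G \<in> carrier_mat (N*?M*?L) (N*?M*?L) \<and> (\<forall>i j. i < N*?M*?L \<longrightarrow> j < N*?M*?L \<longrightarrow>
      Wop N m l G $$ (i,j) = (\<Sum>y\<leftarrow>[1..<N+1]. I y $$ (i,j)))"
  proof -
    have "\<forall>M\<in>set (map I [1..<N+1]). M \<in> carrier_mat (N*?M*?L) (N*?M*?L)" using Ic by auto
    from msum_carrier_index[OF this] show ?thesis unfolding W by (simp add: o_def)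
  qed
  show ?thesis
  proof (rule eq_matI)
    fix i j assume "i < dim_row (BD (N*?M) ?L (\<lambda>c. G (c div ?M + 1) ^\<^sub>m (c mod ?M)))"
      "j < dim_col (BD (N*?M) ?L (\<lambda>c. G (c div ?M + 1) ^\<^sub>m (c mod ?M)))"
    then have ij: "i < N*?M*?L" "j < N*?M*?L" by auto
    define a where "a = i div ?L"
    define b where "b = j div ?L"
    have a: "a < N*?M" "b < N*?M" unfolding a_def b_def using ij by (auto simp: less_mult_imp_div_less)
    have ad: "a div ?M < N" "b div ?M < N" using a by (auto simp: less_mult_imp_div_less)
    have am: "a mod ?M < ?M" "b mod ?M < ?M" by auto
    have im: "i mod ?L < ?L" "j mod ?L < ?L" by auto
    have Tij: "T y x $$ (i,j) = (if y - 1 = a div ?M \<and> y - 1 = b div ?M \<and> x = a mod ?M \<and> x = b mod ?M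
       then (G y ^\<^sub>m x) $$ (i mod ?L, j mod ?L) else 0)" if y: "y \<in> {1..N}" for y x
    proof -
      have c: "G y ^\<^sub>m x \<in> carrier_mat ?L ?L" using G[OF y] by simp
      have "T y x $$ (i,j) = proj N (y - 1) $$ (a div ?M, b div ?M) *
          (proj ?M x $$ (a mod ?M, b mod ?M) * (G y ^\<^sub>m x) $$ (i mod ?L, j mod ?L))"
      proof -
        have d: "dim_row (G y ^\<^sub>m x) = ?L" "dim_col (G y ^\<^sub>m x) = ?L" using c by auto
        have dp: "dim_row (proj n z) = n" "dim_col (proj n z) = n" for n z by (auto simp: proj_def)
        have ij': "i < N * (?M * ?L)" "j < N * (?M * ?L)" using ij by (simp_all add: mult.assoc)
        have k1: "T y x $$ (i,j) = proj N (y-1) $$ (i div (?M*?L), j div (?M*?L)) *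
           kron (proj ?M x) (G y ^\<^sub>m x) $$ (i mod (?M*?L), j mod (?M*?L))"
          unfolding T_def using ij' by (subst kron_index) (simp_all del: pow_mat_dim add: d dp)
        have k2: "kron (proj ?M x) (G y ^\<^sub>m x) $$ (i mod (?M*?L), j mod (?M*?L)) =
           proj ?M x $$ (a mod ?M, b mod ?M) * (G y ^\<^sub>m x) $$ (i mod ?L, j mod ?L)"
          by (subst kron_index) (simp_all del: pow_mat_dim add: d dp div_helper a_def b_def)
        show ?thesis unfolding k1 k2 by (simp add: div_helper a_def b_def)
      qed
      then show ?thesis using ad am im by (auto simp: proj_def)
    qed
    have "Wop N m l G $$ (i,j) = (\<Sum>y\<leftarrow>[1..<N+1]. I y $$ (i,j))" using Wc ij by blast
    also have "\<dots> = (\<Sum>y\<in>{1..<N+1}. I y $$ (i,j))"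
      by (simp only: sum_list_distinct_conv_sum_set distinct_upt set_upt)
    also have "\<dots> = (\<Sum>y\<in>{1..<N+1}. \<Sum>x\<in>{0..<?M}. T y x $$ (i,j))"
    proof (rule sum.cong[OF refl])
      fix y assume "y \<in> {1..<N+1}" then have "y\<in>{1..N}" by auto
      then have "I y $$ (i,j) = (\<Sum>x\<leftarrow>[0..<?M]. T y x $$ (i,j))" using Ic ij by blast
      then show "I y $$ (i,j) = (\<Sum>x\<in>{0..<?M}. T y x $$ (i,j))"
        by (simp only: sum_list_distinct_conv_sum_set distinct_upt set_upt)
    qed
    also have "\<dots> = (\<Sum>y\<in>{1..<N+1}. if y = a div ?M + 1 then (if a = b then
         (G y ^\<^sub>m (a mod ?M)) $$ (i mod ?L, j mod ?L) else 0) else 0)"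
    proof (rule sum.cong[OF refl])
      fix y assume y: "y \<in> {1..<N+1}"
      then have y': "y \<in> {1..N}" by auto
      have "(\<Sum>x\<in>{0..<?M}. T y x $$ (i,j)) = (\<Sum>x\<in>{0..<?M}. if x = a mod ?M then (if y = a div ?M + 1 \<and> a = b then
         (G y ^\<^sub>m (a mod ?M)) $$ (i mod ?L, j mod ?L) else 0) else 0)"
      proof (rule sum.cong[OF refl])
        fix x assume "x \<in> {0..<?M}"
        have "(a = b) = (a div ?M = b div ?M \<and> a mod ?M = b mod ?M)" by (metis div_mult_mod_eq)
        then show "T y x $$ (i,j) = (if x = a mod ?M then (if y = a div ?M + 1 \<and> a = b then
         (G y ^\<^sub>m (a mod ?M)) $$ (i mod ?L, j mod ?L) else 0) else 0)"
          using y by (auto simp: Tij[OF y'])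
      qed
      also have "\<dots> = (if y = a div ?M + 1 then (if a = b then
         (G y ^\<^sub>m (a mod ?M)) $$ (i mod ?L, j mod ?L) else 0) else 0)"
        using am by (simp add: sum.delta')
      finally show "(\<Sum>x\<in>{0..<?M}. T y x $$ (i,j)) = \<dots>" .
    qed
    also have "\<dots> = (if a = b then (G (a div ?M + 1) ^\<^sub>m (a mod ?M)) $$ (i mod ?L, j mod ?L) else 0)"
      using ad by (simp add: sum.delta')
    also have "\<dots> = BD (N*?M) ?L (\<lambda>c. G (c div ?M + 1) ^\<^sub>m (c mod ?M)) $$ (i,j)"
      using ij by (simp add: BD_index a_def b_def)
    finally show "Wop N m l G $$ (i,j) = BD (N*?M) ?L (\<lambda>c. G (c div ?M + 1) ^\<^sub>m (c mod ?M)) $$ (i,j)" .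
  qed (use Wc in auto)
qed


definition Pm :: "nat \<Rightarrow> (nat \<Rightarrow> nat) \<Rightarrow> complex mat" where
  "Pm D \<pi> = mat D D (\<lambda>(i,j). if i = \<pi> j then 1 else 0)"

lemma Pm_carrier[simp]: "Pm D \<pi> \<in> carrier_mat D D" by (simp add: Pm_def)

lemma perm_conj: assumes pi: "\<And>i. i < D \<Longrightarrow> \<pi> i < D" and X: "X \<in> carrier_mat D D"
  shows "adj (Pm D \<pi>) * X * Pm D \<pi> = mat D D (\<lambda>(i,j). X $$ (\<pi> i, \<pi> j))"
proof (rule eq_matI)
  fix i j assume "i < dim_row (mat D D (\<lambda>(i,j). X $$ (\<pi> i, \<pi> j)))" "j < dim_col (mat D D (\<lambda>(i,j). X $$ (\<pi> i, \<pi> j)))"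
  then have ij: "i < D" "j < D" by auto
  have c: "adj (Pm D \<pi>) * X \<in> carrier_mat D D" using mult_carrier_mat[OF adj_carrier_mat[OF Pm_carrier] X] .
  have "(adj (Pm D \<pi>) * X * Pm D \<pi>) $$ (i,j) = (\<Sum>s<D. (adj (Pm D \<pi>) * X) $$ (i,s) * Pm D \<pi> $$ (s,j))"
    using ij by (rule mult_entry[OF c Pm_carrier])
  also have "\<dots> = (\<Sum>s<D. if s = \<pi> j then (adj (Pm D \<pi>) * X) $$ (i,s) else 0)"
    using ij by (intro sum.cong) (auto simp: Pm_def)
  also have "\<dots> = (adj (Pm D \<pi>) * X) $$ (i,\<pi> j)" using pi[OF ij(2)] by (simp add: sum.delta')
  also have "\<dots> = (\<Sum>a<D. adj (Pm D \<pi>) $$ (i,a) * X $$ (a, \<pi> j))"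
    by (rule mult_entry[OF adj_carrier_mat[OF Pm_carrier] X]) (use ij pi[OF ij(2)] in auto)
  also have "\<dots> = (\<Sum>a<D. if a = \<pi> i then X $$ (a, \<pi> j) else 0)"
    using ij by (intro sum.cong) (auto simp: Pm_def)
  also have "\<dots> = X $$ (\<pi> i, \<pi> j)" using pi[OF ij(1)] by (simp add: sum.delta')
  finally show "(adj (Pm D \<pi>) * X * Pm D \<pi>) $$ (i,j) = mat D D (\<lambda>(i,j). X $$ (\<pi> i, \<pi> j)) $$ (i,j)"
    using ij by simp
qed (use X in \<open>auto simp: Pm_def\<close>)

lemma unitary_Pm: assumes pi: "\<And>i. i < D \<Longrightarrow> \<pi> i < D" and inj: "\<And>i j. i < D \<Longrightarrow> j < D \<Longrightarrow> \<pi> i = \<pi> j \<Longrightarrow> i = j"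
  shows "unitary D (Pm D \<pi>)"
proof (rule unitaryI)
  show "Pm D \<pi> \<in> carrier_mat D D" by simp
  have "adj (Pm D \<pi>) * Pm D \<pi> = adj (Pm D \<pi>) * 1\<^sub>m D * Pm D \<pi>"
    using right_mult_one_mat[OF adj_carrier_mat[OF Pm_carrier]] by simp
  also have "\<dots> = mat D D (\<lambda>(i,j). 1\<^sub>m D $$ (\<pi> i, \<pi> j))" by (rule perm_conj[OF pi one_carrier_mat])
  also have "\<dots> = 1\<^sub>m D" using pi inj by (intro eq_matI) auto
  finally show "adj (Pm D \<pi>) * Pm D \<pi> = 1\<^sub>m D" .
qed

definition piQ :: "nat \<Rightarrow> nat \<Rightarrow> nat \<Rightarrow> nat \<Rightarrow> nat" where
  "piQ K L h i = ((i mod L) div h) * (K*h) + (i div L) * h + i mod h"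

lemma piQ_facts: assumes h: "h > 0" and L: "L = Qn * h" and i: "i < K*L"
  shows "piQ K L h i div (K*h) = (i mod L) div h" "piQ K L h i mod (K*h) = (i div L) * h + i mod h"
    "piQ K L h i < K*L"
proof -
  have Qn: "Qn > 0" using i L by (auto intro: gr0I)
  have iL: "i div L < K" using i by (simp add: less_mult_imp_div_less)
  have "(i div L) * h + i mod h < (i div L) * h + h" using h by simp
  also have "\<dots> = (i div L + 1) * h" by simp
  also have "\<dots> \<le> K * h" using iL by (intro mult_le_mono1) simp
  finally have r: "(i div L) * h + i mod h < K*h" .
  have e: "piQ K L h i = ((i div L) * h + i mod h) + ((i mod L) div h) * (K*h)" by (simp add: piQ_def)
  have nz: "K*h \<noteq> 0" by (metis r less_nat_zero_code)
  show "piQ K L h i div (K*h) = (i mod L) div h" unfolding e using r nz by simp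
  show "piQ K L h i mod (K*h) = (i div L) * h + i mod h" unfolding e using r nz by simp
  have "(i mod L) div h < Qn" using L h Qn by (simp add: less_mult_imp_div_less)
  then have "(i mod L) div h + 1 \<le> Qn" by simp
  have "piQ K L h i < ((i mod L) div h) * (K*h) + K*h" unfolding piQ_def using r by simp
  also have "\<dots> = ((i mod L) div h + 1) * (K*h)" by simp
  also have "\<dots> \<le> Qn * (K*h)" using \<open>(i mod L) div h + 1 \<le> Qn\<close> by (intro mult_le_mono1)
  also have "\<dots> = K*L" using L by simp
  finally show "piQ K L h i < K*L" .
qed

lemma piQ_inj: assumes h: "h > 0" and L: "L = Qn * h" and i: "i < K*L" and j: "j < K*L"
  and eq: "piQ K L h i = piQ K L h j" shows "i = j"
proof -
  have a: "(i mod L) div h = (j mod L) div h" using piQ_facts(1)[OF h L i] piQ_facts(1)[OF h L j] eq by simp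
  have b: "(i div L) * h + i mod h = (j div L) * h + j mod h" using piQ_facts(2)[OF h L i] piQ_facts(2)[OF h L j] eq by simp
  have c: "i div L = j div L" "i mod h = j mod h"
  proof -
    have "((i div L) * h + i mod h) div h = i div L" "((j div L) * h + j mod h) div h = j div L" using h by simp_all
    then show "i div L = j div L" using b by metis
    have "((i div L) * h + i mod h) mod h = i mod h" "((j div L) * h + j mod h) mod h = j mod h" using h by simp_all
    then show "i mod h = j mod h" using b by metis
  qed
  have "i mod L mod h = i mod h" "j mod L mod h = j mod h" using L by (simp_all add: mod_mod_cancel)
  then have "i mod L = j mod L" using a c by (metis div_mult_mod_eq)
  then show "i = j" using c by (metis div_mult_mod_eq)
qed

lemma qgate_conj: assumes q: "q \<le> l" and Ob: "Ob \<in> carrier_mat (2^q) (2^q)"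
  and D: "D = K * 2^l"
  shows "adj (Pm D (piQ K (2^l) (2^l div 2^q))) * kron Ob (1\<^sub>m (D div 2^q)) * Pm D (piQ K (2^l) (2^l div 2^q))
     = BD K (2^l) (\<lambda>c. kron Ob (1\<^sub>m (2^l div 2^q)))"
proof -
  define h where "h = (2::nat)^l div 2^q"
  have hh: "h = 2^(l-q)" unfolding h_def using q by (simp add: power_diff)
  have L: "(2::nat)^l = 2^q * h" unfolding hh using q by (simp add: power_add[symmetric])
  have h0: "h > 0" unfolding hh by simp
  have R: "D div 2^q = K*h" unfolding D L by simp
  have pi: "\<And>i. i < D \<Longrightarrow> piQ K (2^l) h i < D" using piQ_facts(3)[OF h0 L] D by simp
  have X0: "kron Ob (1\<^sub>m (K*h)) \<in> carrier_mat (2^q*(K*h)) (2^q*(K*h))" by (rule kron_carrier[OF Ob]) simp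
  have DD: "D = 2^q*(K*h)" using D L by (simp add: ac_simps)
  have X: "kron Ob (1\<^sub>m (D div 2^q)) \<in> carrier_mat D D" using X0 R DD by simp
  have "adj (Pm D (piQ K (2^l) h)) * kron Ob (1\<^sub>m (D div 2^q)) * Pm D (piQ K (2^l) h) =
     mat D D (\<lambda>(i,j). kron Ob (1\<^sub>m (D div 2^q)) $$ (piQ K (2^l) h i, piQ K (2^l) h j))"
    by (rule perm_conj[OF pi X])
  also have "\<dots> = BD K (2^l) (\<lambda>c. kron Ob (1\<^sub>m h))"
    unfolding R
  proof (rule eq_matI)
    fix i j assume "i < dim_row (BD K (2^l) (\<lambda>c. kron Ob (1\<^sub>m h)))" "j < dim_col (BD K (2^l) (\<lambda>c. kron Ob (1\<^sub>m h)))"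
    then have ij: "i < K*2^l" "j < K*2^l" by auto
    have pij: "piQ K (2^l) h i < 2^q * (K*h)" "piQ K (2^l) h j < 2^q * (K*h)"
    proof -
      have "piQ K (2^l) h i < K*2^l" "piQ K (2^l) h j < K*2^l"
        using piQ_facts(3)[OF h0 L ij(1)] piQ_facts(3)[OF h0 L ij(2)] by auto
      moreover have "K*2^l = 2^q * (K*h)" using L by simp
      ultimately show "piQ K (2^l) h i < 2^q * (K*h)" "piQ K (2^l) h j < 2^q * (K*h)" by simp_all
    qed
    have im: "i mod 2^l < 2^q * h" "j mod 2^l < 2^q * h" using L by (metis mod_less_divisor pos2 zero_less_power)+
    have md: "i mod 2^l mod h = i mod h" "j mod 2^l mod h = j mod h" using L by (simp_all add: mod_mod_cancel)
    have eqv: "((i div 2^l) * h + i mod h = (j div 2^l) * h + j mod h) = (i div 2^l = j div 2^l \<and> i mod h = j mod h)"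
      using h0 by (metis div_mult_self1 mod_mult_self1 mod_mod_trivial mod_div_trivial add.commute add_0 less_not_refl2 mult.commute div_mult_mod_eq mod_less_divisor nat_mod_eq_iff)
    have Kh: "K*h > 0" using ij h0 by (auto intro: gr0I)
    have rb: "(i div 2^l)*h + i mod h < K*h" "(j div 2^l)*h + j mod h < K*h"
      using piQ_facts(2)[OF h0 L ij(1)] piQ_facts(2)[OF h0 L ij(2)] Kh by (metis mod_less_divisor)+
    show "mat D D (\<lambda>(i,j). kron Ob (1\<^sub>m (K*h)) $$ (piQ K (2^l) h i, piQ K (2^l) h j)) $$ (i,j) =
       BD K (2^l) (\<lambda>c. kron Ob (1\<^sub>m h)) $$ (i,j)"
      using ij pij im Ob D h0 rb
      by (simp add: kron_index BD_index piQ_facts[OF h0 L] md eqv less_mult_imp_div_less)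
  qed (use D in auto)
  finally show ?thesis unfolding h_def .
qed


datatype 'a item = Fix 'a | Qry bool

fun ev :: "('a \<Rightarrow> complex mat) \<Rightarrow> (bool \<Rightarrow> complex mat) \<Rightarrow> nat \<Rightarrow> 'a item list \<Rightarrow> complex mat" where
  "ev fx qy n [] = 1\<^sub>m n"
| "ev fx qy n (Fix a # ws) = fx a * ev fx qy n ws"
| "ev fx qy n (Qry b # ws) = qy b * ev fx qy n ws"

fun nq :: "'a item list \<Rightarrow> nat" where
  "nq [] = 0"
| "nq (Fix a # ws) = nq ws"
| "nq (Qry b # ws) = Suc (nq ws)"

lemma nq_append[simp]: "nq (xs @ ys) = nq xs + nq ys"
  by (induction xs rule: nq.induct) auto

lemma nq_map[simp]: "nq (map (map_item g) ws) = nq ws"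
  by (induction ws rule: nq.induct) auto

definition fixes_ok :: "('a \<Rightarrow> bool) \<Rightarrow> 'a item list \<Rightarrow> bool" where
  "fixes_ok P ws \<longleftrightarrow> (\<forall>a. Fix a \<in> set ws \<longrightarrow> P a)"

lemma fixes_ok_simps[simp]: "fixes_ok P [] = True" "fixes_ok P (Fix a # ws) = (P a \<and> fixes_ok P ws)"
  "fixes_ok P (Qry b # ws) = fixes_ok P ws" "fixes_ok P (xs @ ys) = (fixes_ok P xs \<and> fixes_ok P ys)"
  by (auto simp: fixes_ok_def)

lemma ev_carrier: assumes "fixes_ok (\<lambda>a. fx a \<in> carrier_mat n n) ws" "\<And>b. qy b \<in> carrier_mat n n"
  shows "ev fx qy n ws \<in> carrier_mat n n"
  using assms by (induction ws rule: nq.induct) (auto intro: mult_carrier_mat)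

lemma ev_append: assumes "fixes_ok (\<lambda>a. fx a \<in> carrier_mat n n) xs" "fixes_ok (\<lambda>a. fx a \<in> carrier_mat n n) ys"
  "\<And>b. qy b \<in> carrier_mat n n"
  shows "ev fx qy n (xs @ ys) = ev fx qy n xs * ev fx qy n ys"
  using assms(1)
proof (induction xs rule: nq.induct)
  have evc: "ev fx qy n ys \<in> carrier_mat n n" by (rule ev_carrier[OF assms(2)]) (rule assms(3))
  case 1 then show ?case using evc by simp
next
  have evc: "ev fx qy n ys \<in> carrier_mat n n" by (rule ev_carrier[OF assms(2)]) (rule assms(3))
  case (2 a ws)
  have "ev fx qy n ws \<in> carrier_mat n n" by (rule ev_carrier) (use 2 assms(3) in auto)
  then show ?case using evc 2
    by (simp add: assoc_mult_mat[of "fx a" n n _ n _ n])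
next
  have evc: "ev fx qy n ys \<in> carrier_mat n n" by (rule ev_carrier[OF assms(2)]) (rule assms(3))
  case (3 b ws)
  have "ev fx qy n ws \<in> carrier_mat n n" by (rule ev_carrier) (use 3 assms(3) in auto)
  then show ?case using evc 3 assms(3)[of b]
    by (simp add: assoc_mult_mat[of "qy b" n n _ n _ n])
qed

lemma circ_cong: "(\<And>j. j \<le> n \<Longrightarrow> V j = V' j) \<Longrightarrow> (\<And>j. j \<le> n \<Longrightarrow> Q j = Q' j) \<Longrightarrow>
  circ D q V Q Or n = circ D q V' Q' Or n"
  by (induction n) auto

lemma qgate_carrier: assumes "Or \<in> carrier_mat (2^q) (2^q)" "2^q dvd D"
  shows "qgate D q Or (b, False) \<in> carrier_mat D D"
proof -
  have "kron (if b then adj Or else Or) (1\<^sub>m (D div 2^q)) \<in> carrier_mat (2^q * (D div 2^q)) (2^q * (D div 2^q))"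
    using assms(1) by (intro kron_carrier) auto
  then show ?thesis using assms(2) by (simp add: qgate_def)
qed

lemma circ_carrier: assumes "\<And>i. i \<le> n \<Longrightarrow> V i \<in> carrier_mat D D" "\<And>i. snd (Q i) = False"
  "Or \<in> carrier_mat (2^q) (2^q)" "2^q dvd D"
  shows "circ D q V Q Or n \<in> carrier_mat D D"
  using assms(1)
proof (induction n)
  case 0 then show ?case by simp
next
  case (Suc n)
  have "Q (Suc n) = (fst (Q (Suc n)), False)" using assms(2) by (metis prod.collapse)
  then have "qgate D q Or (Q (Suc n)) \<in> carrier_mat D D" using qgate_carrier[OF assms(3,4)] by metis
  then show ?case using Suc by (auto intro: mult_carrier_mat)
qed

lemma compile: assumes "fixes_ok (unitary D) ws" "2^q dvd D"
  shows "\<exists>V Q. (\<forall>i\<le>nq ws. unitary D (V i)) \<and> (\<forall>i. snd (Q i) = False) \<and>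
    (\<forall>Or. Or \<in> carrier_mat (2^q) (2^q) \<longrightarrow> circ D q V Q Or (nq ws) = ev (\<lambda>a. a) (\<lambda>b. qgate D q Or (b, False)) D ws)"
  using assms(1)
proof (induction ws rule: nq.induct)
  case 1
  show ?case by (rule exI[of _ "\<lambda>_. 1\<^sub>m D"], rule exI[of _ "\<lambda>_. (False,False)"]) (auto simp: unitary_one)
next
  case (2 F ws)
  then obtain V Q where V: "\<forall>i\<le>nq ws. unitary D (V i)" and Q: "\<forall>i. snd (Q i) = False"
    and E: "\<forall>Or. Or \<in> carrier_mat (2^q) (2^q) \<longrightarrow> circ D q V Q Or (nq ws) = ev (\<lambda>a. a) (\<lambda>b. qgate D q Or (b, False)) D ws"
    by auto
  have F: "unitary D F" using 2 by simp
  define V' where "V' = V(nq ws := F * V (nq ws))"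
  show ?case
  proof (rule exI[of _ V'], rule exI[of _ Q], intro conjI)
    show "\<forall>i\<le>nq (Fix F # ws). unitary D (V' i)" using V F unfolding V'_def by (auto intro: unitary_mult)
    show "\<forall>i. snd (Q i) = False" using Q by simp
    show "\<forall>Or. Or \<in> carrier_mat (2^q) (2^q) \<longrightarrow> circ D q V' Q Or (nq (Fix F # ws)) = ev (\<lambda>a. a) (\<lambda>b. qgate D q Or (b, False)) D (Fix F # ws)"
    proof (intro allI impI)
    fix Or :: "complex mat" assume Or: "Or \<in> carrier_mat (2^q) (2^q)"
    have Vc: "\<And>i. i \<le> nq ws \<Longrightarrow> V i \<in> carrier_mat D D" using V unitary_carrier by blast
    have Fc: "F \<in> carrier_mat D D" using F unitary_carrier by blast
    have "circ D q V' Q Or (nq ws) = F * circ D q V Q Or (nq ws)"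
    proof (cases "nq ws")
      case 0 then show ?thesis unfolding V'_def by simp
    next
      case (Suc p)
      have cc: "circ D q V' Q Or p = circ D q V Q Or p" by (rule circ_cong) (auto simp: V'_def Suc)
      have qc: "qgate D q Or (Q (Suc p)) \<in> carrier_mat D D"
        using qgate_carrier[OF Or assms(2)] Q by (metis prod.collapse)
      have c1: "circ D q V Q Or p \<in> carrier_mat D D" using circ_carrier[of p V D Q Or q] Vc Q Or assms(2) Suc by auto
      have c2: "V (Suc p) \<in> carrier_mat D D" using Vc Suc by auto
      show ?thesis unfolding Suc using cc qc c1 c2 Fc apply (simp add: V'_def Suc)
        by (metis assoc_mult_mat mult_carrier_mat)
    qed
    also have "\<dots> = ev (\<lambda>a. a) (\<lambda>b. qgate D q Or (b, False)) D (Fix F # ws)" using E Or by simp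
    finally show "circ D q V' Q Or (nq (Fix F # ws)) = ev (\<lambda>a. a) (\<lambda>b. qgate D q Or (b, False)) D (Fix F # ws)" by simp
  qed
  qed
next
  case (3 b ws)
  then obtain V Q where V: "\<forall>i\<le>nq ws. unitary D (V i)" and Q: "\<forall>i. snd (Q i) = False"
    and E: "\<forall>Or. Or \<in> carrier_mat (2^q) (2^q) \<longrightarrow> circ D q V Q Or (nq ws) = ev (\<lambda>a. a) (\<lambda>b. qgate D q Or (b, False)) D ws"
    by auto
  define V' where "V' = V(Suc (nq ws) := 1\<^sub>m D)"
  define Q' where "Q' = Q(Suc (nq ws) := (b, False))"
  show ?case
  proof (rule exI[of _ V'], rule exI[of _ Q'], intro conjI)
    show "\<forall>i\<le>nq (Qry b # ws). unitary D (V' i)" using V unfolding V'_def by (auto simp: unitary_one le_Suc_eq)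
    show "\<forall>i. snd (Q' i) = False" using Q by (simp add: Q'_def)
    show "\<forall>Or. Or \<in> carrier_mat (2^q) (2^q) \<longrightarrow> circ D q V' Q' Or (nq (Qry b # ws)) = ev (\<lambda>a. a) (\<lambda>b. qgate D q Or (b, False)) D (Qry b # ws)"
    proof (intro allI impI)
    fix Or :: "complex mat" assume Or: "Or \<in> carrier_mat (2^q) (2^q)"
    have Vc: "\<And>i. i \<le> nq ws \<Longrightarrow> V i \<in> carrier_mat D D" using V unitary_carrier by blast
    have cc: "circ D q V' Q' Or (nq ws) = circ D q V Q Or (nq ws)" by (rule circ_cong) (auto simp: V'_def Q'_def)
    have qc: "qgate D q Or (b, False) \<in> carrier_mat D D" using qgate_carrier[OF Or assms(2)] .
    have "circ D q V' Q' Or (nq (Qry b # ws)) = qgate D q Or (b, False) * circ D q V Q Or (nq ws)"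
      using cc qc by (simp add: V'_def Q'_def)
    also have "\<dots> = ev (\<lambda>a. a) (\<lambda>b. qgate D q Or (b, False)) D (Qry b # ws)" using E Or by simp
    finally show "circ D q V' Q' Or (nq (Qry b # ws)) = ev (\<lambda>a. a) (\<lambda>b. qgate D q Or (b, False)) D (Qry b # ws)" .
  qed
  qed
qed


lemma conj_mult: assumes P: "unitary n P" and A: "A \<in> carrier_mat n n" and B: "B \<in> carrier_mat n n"
  shows "(P * A * adj P) * (P * B * adj P) = P * (A*B) * adj P"
proof -
  have Pc: "P \<in> carrier_mat n n" "adj P \<in> carrier_mat n n" using P unitary_carrier by auto
  have "(P * A * adj P) * (P * B * adj P) = P * (A * ((adj P * P) * (B * adj P)))"
    using Pc A B by (simp add: assoc_mult_mat[of _ n n _ n _ n])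
  also have "\<dots> = P * (A * (B * adj P))" using P B Pc by (simp add: unitary_def)
  also have "\<dots> = P * (A*B) * adj P" using Pc A B by (simp add: assoc_mult_mat[of _ n n _ n _ n])
  finally show ?thesis .
qed

lemma ev_glob: assumes P: "unitary (K*L) P" and Ob: "\<And>b. Ob b \<in> carrier_mat L L"
  and qy: "\<And>b. qy b = P * BD K L (\<lambda>c. Ob b) * adj P"
  and ws: "fixes_ok (\<lambda>f. \<forall>c<K. f c \<in> carrier_mat L L) ws"
  shows "ev (\<lambda>a. a) qy (K*L) (map (map_item (\<lambda>f. P * BD K L f * adj P)) ws) = P * BD K L (\<lambda>c. ev (\<lambda>f. f c) Ob L ws) * adj P"
  using ws
proof (induction ws rule: nq.induct)
  case 1
  have Pc: "P \<in> carrier_mat (K*L) (K*L)" using P unitary_carrier by auto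
  have "P * BD K L (\<lambda>c. 1\<^sub>m L) * adj P = 1\<^sub>m (K*L)"
    using Pc P by (simp add: BD_one unitary_def)
  then show ?case by simp
next
  case (2 f ws)
  have evc: "\<And>c. c < K \<Longrightarrow> ev (\<lambda>f. f c) Ob L ws \<in> carrier_mat L L"
    using 2(2) Ob by (intro ev_carrier) (auto simp: fixes_ok_def)
  have fc: "\<And>c. c < K \<Longrightarrow> f c \<in> carrier_mat L L" using 2(2) by simp
  have "ev (\<lambda>a. a) qy (K*L) (map (map_item (\<lambda>f. P * BD K L f * adj P)) (Fix f # ws)) =
    (P * BD K L f * adj P) * (P * BD K L (\<lambda>c. ev (\<lambda>f. f c) Ob L ws) * adj P)"
    using 2 by simp
  also have "\<dots> = P * (BD K L f * BD K L (\<lambda>c. ev (\<lambda>f. f c) Ob L ws)) * adj P"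
    by (rule conj_mult[OF P]) simp_all
  also have "\<dots> = P * BD K L (\<lambda>c. ev (\<lambda>f. f c) Ob L (Fix f # ws)) * adj P"
    using fc evc by (simp add: BD_mult)
  finally show ?case .
next
  case (3 b ws)
  have evc: "\<And>c. c < K \<Longrightarrow> ev (\<lambda>f. f c) Ob L ws \<in> carrier_mat L L"
    using 3(2) Ob by (intro ev_carrier) (auto simp: fixes_ok_def)
  have "ev (\<lambda>a. a) qy (K*L) (map (map_item (\<lambda>f. P * BD K L f * adj P)) (Qry b # ws)) =
    (P * BD K L (\<lambda>c. Ob b) * adj P) * (P * BD K L (\<lambda>c. ev (\<lambda>f. f c) Ob L ws) * adj P)"
    using 3 by (simp add: qy[of b])
  also have "\<dots> = P * (BD K L (\<lambda>c. Ob b) * BD K L (\<lambda>c. ev (\<lambda>f. f c) Ob L ws)) * adj P"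
    by (rule conj_mult[OF P]) simp_all
  also have "\<dots> = P * BD K L (\<lambda>c. ev (\<lambda>f. f c) Ob L (Qry b # ws)) * adj P"
    using Ob evc by (simp add: BD_mult)
  finally show ?case .
qed


definition Obl :: "complex mat \<Rightarrow> nat \<Rightarrow> nat \<Rightarrow> bool \<Rightarrow> complex mat" where
  "Obl Or l q b = kron (if b then adj Or else Or) (1\<^sub>m (2^l div 2^q))"

lemma Obl_True: "Obl Or l q True = adj (Obl Or l q False)"
  by (simp add: Obl_def adj_kron)

lemma Obl_unitary: assumes "q \<le> l" "unitary (2^q) Or" shows "unitary (2^l) (Obl Or l q False)"
proof -
  have "(2::nat)^q * (2^l div 2^q) = 2^l" using assms(1) by (simp add: power_diff[symmetric] power_add[symmetric])
  then show ?thesis using unitary_kron[OF assms(2) unitary_one[of "2^l div 2^q"]] by (simp add: Obl_def)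
qed

fun aw :: "(nat \<Rightarrow> nat \<Rightarrow> complex mat) \<Rightarrow> nat \<Rightarrow> nat \<Rightarrow> (nat \<Rightarrow> complex mat) item list" where
  "aw U m 0 = [Fix (\<lambda>c. U (c div 2^m + 1) 0)]"
| "aw U m (Suc i) = Fix (\<lambda>c. U (c div 2^m + 1) (Suc i)) # Qry False # aw U m i"

fun adw :: "(nat \<Rightarrow> nat \<Rightarrow> complex mat) \<Rightarrow> nat \<Rightarrow> nat \<Rightarrow> (nat \<Rightarrow> complex mat) item list" where
  "adw U m 0 = [Fix (\<lambda>c. adj (U (c div 2^m + 1) 0))]"
| "adw U m (Suc i) = adw U m i @ [Qry True, Fix (\<lambda>c. adj (U (c div 2^m + 1) (Suc i)))]"

definition sw :: "nat \<Rightarrow> (nat \<Rightarrow> nat \<Rightarrow> complex mat) \<Rightarrow> (nat \<Rightarrow> nat) \<Rightarrow> nat \<Rightarrow> nat \<Rightarrow> nat \<Rightarrow> (nat \<Rightarrow> complex mat) item list" where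
  "sw l U \<gamma> m k j = aw U m k @ [Fix (\<lambda>c. if j < c mod 2^m then (-1) \<cdot>\<^sub>m S0 l else 1\<^sub>m (2^l))] @ adw U m k @
     [Fix (\<lambda>c. if j < c mod 2^m then Mgam l (\<gamma> (c div 2^m + 1)) else 1\<^sub>m (2^l))]"

fun word :: "nat \<Rightarrow> (nat \<Rightarrow> nat \<Rightarrow> complex mat) \<Rightarrow> (nat \<Rightarrow> nat) \<Rightarrow> nat \<Rightarrow> nat \<Rightarrow> nat \<Rightarrow> (nat \<Rightarrow> complex mat) item list" where
  "word l U \<gamma> m k 0 = []"
| "word l U \<gamma> m k (Suc n) = word l U \<gamma> m k n @ sw l U \<gamma> m k n"

lemma nq_aw[simp]: "nq (aw U m i) = i" by (induction i) auto
lemma nq_adw[simp]: "nq (adw U m i) = i" by (induction i) auto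
lemma nq_sw[simp]: "nq (sw l U \<gamma> m k j) = 2*k" by (simp add: sw_def)
lemma nq_word[simp]: "nq (word l U \<gamma> m k n) = n*(2*k)" by (induction n) auto

lemma fixes_aw: assumes "\<And>c i. c \<in> C \<Longrightarrow> i \<le> k \<Longrightarrow> P (U (c div 2^m + 1) i)"
  shows "i \<le> k \<Longrightarrow> fixes_ok (\<lambda>f. \<forall>c\<in>C. P (f c)) (aw U m i)"
  using assms by (induction i) auto

lemma fixes_adw: assumes "\<And>c i. c \<in> C \<Longrightarrow> i \<le> k \<Longrightarrow> P (adj (U (c div 2^m + 1) i))"
  shows "i \<le> k \<Longrightarrow> fixes_ok (\<lambda>f. \<forall>c\<in>C. P (f c)) (adw U m i)"
  using assms by (induction i) auto

lemma fixes_sw: assumes "\<And>c i. c \<in> C \<Longrightarrow> i \<le> k \<Longrightarrow> P (U (c div 2^m + 1) i)"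
  "\<And>c i. c \<in> C \<Longrightarrow> i \<le> k \<Longrightarrow> P (adj (U (c div 2^m + 1) i))"
  "P ((-1) \<cdot>\<^sub>m S0 l)" "P (1\<^sub>m (2^l))" "\<And>c. c \<in> C \<Longrightarrow> P (Mgam l (\<gamma> (c div 2^m + 1)))"
  shows "fixes_ok (\<lambda>f. \<forall>c\<in>C. P (f c)) (sw l U \<gamma> m k j)"
  unfolding sw_def using fixes_aw[where C=C and k=k and P=P and U=U and m=m, OF assms(1)]
    fixes_adw[where C=C and k=k and P=P and U=U and m=m, OF assms(2)] assms(3-5) by auto

lemma fixes_word: assumes "\<And>c i. c \<in> C \<Longrightarrow> i \<le> k \<Longrightarrow> P (U (c div 2^m + 1) i)"
  "\<And>c i. c \<in> C \<Longrightarrow> i \<le> k \<Longrightarrow> P (adj (U (c div 2^m + 1) i))"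
  "P ((-1) \<cdot>\<^sub>m S0 l)" "P (1\<^sub>m (2^l))" "\<And>c. c \<in> C \<Longrightarrow> P (Mgam l (\<gamma> (c div 2^m + 1)))"
  shows "fixes_ok (\<lambda>f. \<forall>c\<in>C. P (f c)) (word l U \<gamma> m k n)"
  using fixes_sw[where C=C and k=k and P=P and U=U and m=m and l=l and \<gamma>=\<gamma>, OF assms] by (induction n) auto

lemma alg_unitary: assumes "\<And>i. i \<le> k \<Longrightarrow> unitary (2^l) (u i)" "unitary (2^l) (Obl Or l q False)"
  shows "i \<le> k \<Longrightarrow> unitary (2^l) (alg l q u Or i)"
  using assms by (induction i) (auto simp: Obl_def intro!: unitary_mult)


lemma mult_carrier_sq[simp]: "A \<in> carrier_mat n n \<Longrightarrow> B \<in> carrier_mat n n \<Longrightarrow> A*B \<in> carrier_mat n n"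
  by (rule mult_carrier_mat)

lemma fixes_ok_mono: "fixes_ok P ws \<Longrightarrow> (\<And>a. P a \<Longrightarrow> P' a) \<Longrightarrow> fixes_ok P' ws"
  by (auto simp: fixes_ok_def)

lemma unitary_S0neg: "unitary (2^l) ((-1) \<cdot>\<^sub>m S0 l)"
  unfolding negS0_dm by (rule unitary_dm) auto
lemma unitary_Mgam: "unitary (2^l) (Mgam l g)"
  unfolding Mgam_dm by (rule unitary_dm) auto
lemma Mgam_carrier[simp]: "Mgam l g \<in> carrier_mat (2^l) (2^l)" by (simp add: Mgam_dm dm_def)
lemma S0_carrier[simp]: "S0 l \<in> carrier_mat (2^l) (2^l)" by (simp add: S0_dm)

context
  fixes U :: "nat \<Rightarrow> nat \<Rightarrow> complex mat" and Or :: "complex mat" and l q m k c :: nat and \<gamma> :: "nat \<Rightarrow> nat"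
  assumes Uu: "\<And>i. i \<le> k \<Longrightarrow> unitary (2^l) (U (c div 2^m + 1) i)"
  and Ou: "unitary (2^l) (Obl Or l q False)"
begin

abbreviation "y \<equiv> c div 2^m + 1"
abbreviation "Ev ws \<equiv> ev (\<lambda>f. f c) (Obl Or l q) (2^l) ws"

lemma Uc: "i \<le> k \<Longrightarrow> U y i \<in> carrier_mat (2^l) (2^l)" using Uu unitary_carrier by blast
lemma Oc: "Obl Or l q False \<in> carrier_mat (2^l) (2^l)" using Ou unitary_carrier by blast
lemma Oc2: "Obl Or l q b \<in> carrier_mat (2^l) (2^l)" using Oc by (cases b) (auto simp: Obl_True)
lemma Ac: "i \<le> k \<Longrightarrow> alg l q (U y) Or i \<in> carrier_mat (2^l) (2^l)"
  using alg_unitary[where k=k and l=l and u="U y" and Or=Or and q=q, OF Uu Ou] unitary_carrier by blast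
lemma alg_Suc: "alg l q (U y) Or (Suc i) = U y (Suc i) * Obl Or l q False * alg l q (U y) Or i"
  by (simp add: Obl_def)

lemma ev_aw: "i \<le> k \<Longrightarrow> Ev (aw U m i) = alg l q (U y) Or i"
proof (induction i)
  case 0 then show ?case using Uc[of 0] by simp
next
  case (Suc i)
  then have "Ev (aw U m (Suc i)) = U y (Suc i) * (Obl Or l q False * alg l q (U y) Or i)" by simp
  also have "\<dots> = alg l q (U y) Or (Suc i)" unfolding alg_Suc
    using Uc[OF Suc.prems] Oc Ac[of i] Suc.prems by (simp add: assoc_mult_mat[of _ "2^l" "2^l" _ "2^l" _ "2^l"])
  finally show ?case .
qed

lemma fixes_adw_c: "i \<le> k \<Longrightarrow> fixes_ok (\<lambda>f. f c \<in> carrier_mat (2^l) (2^l)) (adw U m i)"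
  using fixes_adw[where C="{c}" and k=k and P="\<lambda>M. M \<in> carrier_mat (2^l) (2^l)" and U=U and m=m and i=i]
    Uc by (auto elim!: fixes_ok_mono)

lemma ev_adw: "i \<le> k \<Longrightarrow> Ev (adw U m i) = adj (alg l q (U y) Or i)"
proof (induction i)
  case 0 then show ?case using Uc[of 0] by simp
next
  case (Suc i)
  have "Ev (adw U m (Suc i)) = Ev (adw U m i) * Ev [Qry True, Fix (\<lambda>c. adj (U (c div 2^m + 1) (Suc i)))]"
    using fixes_adw_c[of i] Suc.prems Uc[OF Suc.prems] Oc2 by (simp add: ev_append)
  also have "\<dots> = adj (alg l q (U y) Or i) * (adj (Obl Or l q False) * adj (U y (Suc i)))"
    using Suc Uc[OF Suc.prems] by (simp add: Obl_True)
  also have "\<dots> = adj (alg l q (U y) Or (Suc i))" unfolding alg_Suc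
    using Uc[OF Suc.prems] Oc Ac[of i] Suc.prems
    by (simp add: adj_mult[of _ "2^l" "2^l" _ "2^l"] assoc_mult_mat[of _ "2^l" "2^l" _ "2^l" _ "2^l"])
  finally show ?case .
qed

abbreviation "Gb \<equiv> Gop l (alg l q (U y) Or k) (\<gamma> y)"

lemma Gc: "Gb \<in> carrier_mat (2^l) (2^l)"
  using Ac[of k] by (simp add: Gop_def)

lemma ev_sw: "Ev (sw l U \<gamma> m k j) = (if j < c mod 2^m then Gb else 1\<^sub>m (2^l))"
proof -
  let ?A = "alg l q (U y) Or k"
  let ?S = "if j < c mod 2^m then (-1) \<cdot>\<^sub>m S0 l else 1\<^sub>m (2^l)"
  let ?M = "if j < c mod 2^m then Mgam l (\<gamma> y) else 1\<^sub>m (2^l)"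
  have fa: "fixes_ok (\<lambda>f. f c \<in> carrier_mat (2^l) (2^l)) (aw U m k)"
    using fixes_aw[where C="{c}" and k=k and P="\<lambda>M. M \<in> carrier_mat (2^l) (2^l)" and U=U and m=m and i=k]
    Uc by (auto elim!: fixes_ok_mono)
  have Sc: "?S \<in> carrier_mat (2^l) (2^l)" and Mc: "?M \<in> carrier_mat (2^l) (2^l)" by auto
  have "Ev (sw l U \<gamma> m k j) = ?A * (?S * (adj ?A * ?M))"
    unfolding sw_def using fa fixes_adw_c[of k] Oc2 Sc Mc
    by (simp add: ev_append ev_aw ev_adw)
  also have "\<dots> = (if j < c mod 2^m then Gb else 1\<^sub>m (2^l))"
  proof (cases "j < c mod 2^m")
    case True
    have X: "adj ?A * Mgam l (\<gamma> y) \<in> carrier_mat (2^l) (2^l)" using Ac[of k] by simp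
    have Y: "S0 l * (adj ?A * Mgam l (\<gamma> y)) \<in> carrier_mat (2^l) (2^l)" using X by simp
    have "?A * (((-1) \<cdot>\<^sub>m S0 l) * (adj ?A * Mgam l (\<gamma> y))) = ?A * ((-1) \<cdot>\<^sub>m (S0 l * (adj ?A * Mgam l (\<gamma> y))))"
      using mult_smult_assoc_mat[OF S0_carrier X] by simp
    also have "\<dots> = (-1) \<cdot>\<^sub>m (?A * (S0 l * (adj ?A * Mgam l (\<gamma> y))))"
      by (rule mult_smult_distrib[OF Ac[of k] Y]) simp
    also have "\<dots> = Gb" unfolding Gop_def using Ac[of k]
      by (simp add: assoc_mult_mat[of _ "2^l" "2^l" _ "2^l" _ "2^l"])
    finally show ?thesis using True by simp
  next
    case False
    then show ?thesis using Ac[of k] unitary_AadjA[OF alg_unitary[where k=k and l=l and u="U y" and Or=Or and q=q, OF Uu Ou, of k]] by simp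
  qed
  finally show ?thesis .
qed

lemma ev_word: "Ev (word l U \<gamma> m k n) = Gb ^\<^sub>m (min (c mod 2^m) n)"
proof (induction n)
  case 0 then show ?case using Gc by simp
next
  case (Suc n)
  have fw: "fixes_ok (\<lambda>f. f c \<in> carrier_mat (2^l) (2^l)) (word l U \<gamma> m k n)"
    using fixes_word[where C="{c}" and k=k and P="\<lambda>M. M \<in> carrier_mat (2^l) (2^l)" and U=U and m=m and l=l and \<gamma>=\<gamma> and n=n]
    Uc by (auto elim!: fixes_ok_mono)
  have fs: "fixes_ok (\<lambda>f. f c \<in> carrier_mat (2^l) (2^l)) (sw l U \<gamma> m k n)"
    using fixes_sw[where C="{c}" and k=k and P="\<lambda>M. M \<in> carrier_mat (2^l) (2^l)" and U=U and m=m and l=l and \<gamma>=\<gamma> and j=n]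
    Uc by (auto elim!: fixes_ok_mono)
  have "Ev (word l U \<gamma> m k (Suc n)) = Gb ^\<^sub>m (min (c mod 2^m) n) * (if n < c mod 2^m then Gb else 1\<^sub>m (2^l))"
    using fw fs Oc2 Suc by (simp add: ev_append ev_sw)
  also have "\<dots> = Gb ^\<^sub>m (min (c mod 2^m) (Suc n))"
  proof (cases "n < c mod 2^m")
    case True
    then have "min (c mod 2^m) n = n" "min (c mod 2^m) (Suc n) = Suc n" by auto
    then show ?thesis using True by simp
  next
    case False
    then have "min (c mod 2^m) n = c mod 2^m" "min (c mod 2^m) (Suc n) = c mod 2^m" by auto
    then show ?thesis using False Gc by simp
  qed
  finally show ?case .
qed

end


lemma BD_cong: "(\<And>c. c < K \<Longrightarrow> F c = G c) \<Longrightarrow> BD K L F = BD K L G"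
  unfolding BD_def by (intro cong_mat refl) (auto simp: less_mult_imp_div_less)

lemma unconj: assumes P: "unitary n P" and X: "X \<in> carrier_mat n n"
  shows "P * (adj P * X * P) * adj P = X"
proof -
  have Pc: "P \<in> carrier_mat n n" "adj P \<in> carrier_mat n n" using P unitary_carrier by auto
  have "P * (adj P * X * P) * adj P = (P * adj P) * X * (P * adj P)"
    using Pc X by (simp add: assoc_mult_mat[of _ n n _ n _ n])
  also have "\<dots> = X" using P X by (simp add: unitary_def)
  finally show ?thesis .
qed

lemma conj_unconj: assumes P: "unitary n P" and X: "X \<in> carrier_mat n n"
  shows "adj P * (P * X * adj P) * P = X"
  using unconj[OF unitary_adj[OF P] X] by simp

theorem lemma9:
  "\<exists>C::nat. \<forall>(N::nat) (l::nat) (m::nat) (k::nat) (q::nat)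
      (U :: nat \<Rightarrow> nat \<Rightarrow> complex mat) (\<gamma> :: nat \<Rightarrow> nat).
    (q \<le> l \<and> (\<forall>y\<in>{1..N}. (\<forall>i\<le>k. unitary (2^l) (U y i)) \<and> \<gamma> y < 2^l)) \<longrightarrow>
    (\<exists>(a::nat) (t::nat) (V :: nat \<Rightarrow> complex mat) (Q :: nat \<Rightarrow> bool \<times> bool).
       t \<le> C * k * 2^m \<and>
       (\<forall>i\<le>t. unitary (N * 2^m * 2^l * 2^a) (V i)) \<and>
       (\<forall>i\<in>{1..t}. snd (Q i) \<longrightarrow> 2 * 2^q dvd N * 2^m * 2^l * 2^a) \<and>
       (\<forall>Or. unitary (2^q) Or \<longrightarrow>
          circ (N * 2^m * 2^l * 2^a) q V Q Or t * kron (1\<^sub>m (N * 2^m * 2^l)) (ket0 (2^a))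
          = kron (Wop N m l (\<lambda>y. Gop l (alg l q (U y) Or k) (\<gamma> y))) (ket0 (2^a))))"
proof (rule exI[of _ 2], intro allI impI)
  fix N l m k q :: nat and U :: "nat \<Rightarrow> nat \<Rightarrow> complex mat" and \<gamma> :: "nat \<Rightarrow> nat"
  assume H: "q \<le> l \<and> (\<forall>y\<in>{1..N}. (\<forall>i\<le>k. unitary (2^l) (U y i)) \<and> \<gamma> y < 2^l)"
  have ql: "q \<le> l" using H by simp
  have HU: "\<And>y i. y \<in> {1..N} \<Longrightarrow> i \<le> k \<Longrightarrow> unitary (2^l) (U y i)" using H by blast
  define K where "K = N * 2^m"
  define h where "h = (2::nat)^l div 2^q"
  define D where "D = N * 2^m * 2^l"
  have hh: "h = 2^(l-q)" unfolding h_def using ql by (simp add: power_diff)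
  have L: "(2::nat)^l = 2^q * h" unfolding hh using ql by (simp add: power_add[symmetric])
  have h0: "h > 0" unfolding hh by simp
  have DK: "D = K * 2^l" unfolding D_def K_def by simp
  define P where "P = Pm D (piQ K (2^l) h)"
  have Pu: "unitary D P" unfolding P_def DK
    by (rule unitary_Pm) (auto intro: piQ_facts(3)[OF h0 L] piQ_inj[OF h0 L])
  have Uy: "\<And>c i. c < K \<Longrightarrow> i \<le> k \<Longrightarrow> unitary (2^l) (U (c div 2^m + 1) i)"
  proof -
    fix c i assume "c < K" "i \<le> k"
    then have "c div 2^m < N" unfolding K_def by (simp add: less_mult_imp_div_less)
    then show "unitary (2^l) (U (c div 2^m + 1) i)" using HU \<open>i \<le> k\<close> by auto
  qed
  define ws where "ws = word l U \<gamma> m k (2^m)"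
  have wsok: "fixes_ok (\<lambda>f. \<forall>c<K. unitary (2^l) (f c)) ws"
    using fixes_word[where C="{..<K}" and k=k and P="unitary (2^l)" and U=U and m=m and l=l and \<gamma>=\<gamma> and n="2^m"]
      Uy unitary_adj unitary_S0neg unitary_one unitary_Mgam
    unfolding ws_def by (auto elim!: fixes_ok_mono)
  define gw where "gw = Fix (adj P) # map (map_item (\<lambda>f. P * BD K (2^l) f * adj P)) ws @ [Fix P]"
  have gwok: "fixes_ok (unitary D) gw"
  proof -
    have "fixes_ok (unitary D) (map (map_item (\<lambda>f. P * BD K (2^l) f * adj P)) ws)"
      using wsok
    proof (induction ws rule: nq.induct)
      case (2 f ws)
      then have "unitary D (BD K (2^l) f)" unfolding DK by (intro unitary_BD) auto
      then show ?case using 2 Pu by (auto intro!: unitary_mult unitary_adj)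
    qed auto
    then show ?thesis unfolding gw_def using Pu unitary_adj by auto
  qed
  have dvd: "2^q dvd D" unfolding DK L by simp
  obtain V Q where V: "\<forall>i\<le>nq gw. unitary D (V i)" and Q: "\<forall>i. snd (Q i) = False"
    and E: "\<forall>Or. Or \<in> carrier_mat (2^q) (2^q) \<longrightarrow> circ D q V Q Or (nq gw) = ev (\<lambda>a. a) (\<lambda>b. qgate D q Or (b, False)) D gw"
    using compile[OF gwok dvd] by blast
  have nqgw: "nq gw = 2^m * (2*k)" unfolding gw_def ws_def by simp
  show "\<exists>a t V Q. t \<le> 2 * k * 2^m \<and>
       (\<forall>i\<le>t. unitary (N * 2^m * 2^l * 2^a) (V i)) \<and>
       (\<forall>i\<in>{1..t}. snd (Q i) \<longrightarrow> 2 * 2^q dvd N * 2^m * 2^l * 2^a) \<and>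
       (\<forall>Or. unitary (2^q) Or \<longrightarrow>
          circ (N * 2^m * 2^l * 2^a) q V Q Or t * kron (1\<^sub>m (N * 2^m * 2^l)) (ket0 (2^a))
          = kron (Wop N m l (\<lambda>y. Gop l (alg l q (U y) Or k) (\<gamma> y))) (ket0 (2^a)))"
  proof (rule exI[of _ 0], rule exI[of _ "nq gw"], rule exI[of _ V], rule exI[of _ Q], intro conjI)
    show "nq gw \<le> 2 * k * 2^m" unfolding nqgw by simp
    show "\<forall>i\<le>nq gw. unitary (N * 2^m * 2^l * 2^0) (V i)" using V unfolding D_def by simp
    show "\<forall>i\<in>{1..nq gw}. snd (Q i) \<longrightarrow> 2 * 2^q dvd N * 2^m * 2^l * 2^0" using Q by simp
    show "\<forall>Or. unitary (2^q) Or \<longrightarrow>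
          circ (N * 2^m * 2^l * 2^0) q V Q Or (nq gw) * kron (1\<^sub>m (N * 2^m * 2^l)) (ket0 (2^0))
          = kron (Wop N m l (\<lambda>y. Gop l (alg l q (U y) Or k) (\<gamma> y))) (ket0 (2^0))"
    proof (intro allI impI)
      fix Or assume Or: "unitary (2^q) Or"
      have Orc: "Or \<in> carrier_mat (2^q) (2^q)" using Or unitary_carrier by blast
      have Ou: "unitary (2^l) (Obl Or l q False)" by (rule Obl_unitary[OF ql Or])
      have Oc: "\<And>b. Obl Or l q b \<in> carrier_mat (2^l) (2^l)"
        using Ou unitary_carrier Obl_True by (metis adj_carrier_mat)
      have qg: "qgate D q Or (b, False) = P * BD K (2^l) (\<lambda>c. Obl Or l q b) * adj P" for b
      proof -
        have Obc: "(if b then adj Or else Or) \<in> carrier_mat (2^q) (2^q)" using Orc by auto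
        have X: "qgate D q Or (b, False) \<in> carrier_mat D D" by (rule qgate_carrier[OF Orc dvd])
        have "adj P * qgate D q Or (b, False) * P = BD K (2^l) (\<lambda>c. Obl Or l q b)"
          unfolding P_def h_def qgate_def Obl_def using qgate_conj[OF ql Obc DK] by simp
        then show ?thesis using unconj[OF Pu X] by metis
      qed
      have wsc: "fixes_ok (\<lambda>f. \<forall>c<K. f c \<in> carrier_mat (2^l) (2^l)) ws"
        using wsok by (rule fixes_ok_mono) (auto simp: unitary_def)
      have evm: "ev (\<lambda>a. a) (\<lambda>b. qgate D q Or (b, False)) D (map (map_item (\<lambda>f. P * BD K (2^l) f * adj P)) ws)
          = P * BD K (2^l) (\<lambda>c. ev (\<lambda>f. f c) (Obl Or l q) (2^l) ws) * adj P"
        unfolding DK by (rule ev_glob[OF Pu[unfolded DK] Oc qg[unfolded DK] wsc])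
      have BDeq: "BD K (2^l) (\<lambda>c. ev (\<lambda>f. f c) (Obl Or l q) (2^l) ws) =
          BD K (2^l) (\<lambda>c. Gop l (alg l q (U (c div 2^m + 1)) Or k) (\<gamma> (c div 2^m + 1)) ^\<^sub>m (c mod 2^m))"
      proof (rule BD_cong)
        fix c assume c: "c < K"
        have "ev (\<lambda>f. f c) (Obl Or l q) (2^l) ws = Gop l (alg l q (U (c div 2^m + 1)) Or k) (\<gamma> (c div 2^m + 1)) ^\<^sub>m (min (c mod 2^m) (2^m))"
          unfolding ws_def by (rule ev_word[where U=U and Or=Or and l=l and q=q and m=m and k=k and c=c and \<gamma>=\<gamma> and n="2^m", OF Uy[OF c] Ou])
        then show "ev (\<lambda>f. f c) (Obl Or l q) (2^l) ws = Gop l (alg l q (U (c div 2^m + 1)) Or k) (\<gamma> (c div 2^m + 1)) ^\<^sub>m (c mod 2^m)"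
          by (simp add: min_def)
      qed
      have Gc: "Gop l (alg l q (U y) Or k) (\<gamma> y) \<in> carrier_mat (2^l) (2^l)" if "y \<in> {1..N}" for y
      proof -
        have "alg l q (U y) Or k \<in> carrier_mat (2^l) (2^l)"
          using alg_unitary[where k=k and l=l and u="U y" and Or=Or and q=q, OF HU[OF that] Ou] unitary_carrier by blast
        then show ?thesis by (simp add: Gop_def)
      qed
      have BDc: "BD K (2^l) (\<lambda>c. ev (\<lambda>f. f c) (Obl Or l q) (2^l) ws) \<in> carrier_mat D D" unfolding DK by simp
      have "circ D q V Q Or (nq gw) = ev (\<lambda>a. a) (\<lambda>b. qgate D q Or (b, False)) D gw" using E Orc by blast
      also have "\<dots> = adj P * (P * BD K (2^l) (\<lambda>c. ev (\<lambda>f. f c) (Obl Or l q) (2^l) ws) * adj P * (P * 1\<^sub>m D))"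
      proof -
        have f1: "fixes_ok (\<lambda>a. a \<in> carrier_mat D D) (map (map_item (\<lambda>f. P * BD K (2^l) f * adj P)) ws)"
          using gwok unfolding gw_def by (auto elim!: fixes_ok_mono simp: unitary_def)
        have Pc: "P \<in> carrier_mat D D" using Pu unitary_carrier by blast
        show ?thesis unfolding gw_def using f1 Pc qgate_carrier[OF Orc dvd]
          by (simp add: ev_append evm)
      qed
      also have "\<dots> = BD K (2^l) (\<lambda>c. ev (\<lambda>f. f c) (Obl Or l q) (2^l) ws)"
      proof -
        have Pc: "P \<in> carrier_mat D D" using Pu unitary_carrier by blast
        have "adj P * (P * BD K (2^l) (\<lambda>c. ev (\<lambda>f. f c) (Obl Or l q) (2^l) ws) * adj P * (P * 1\<^sub>m D)) =
          adj P * (P * BD K (2^l) (\<lambda>c. ev (\<lambda>f. f c) (Obl Or l q) (2^l) ws) * adj P) * P"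
          using Pc BDc by (simp add: assoc_mult_mat[of _ D D _ D _ D])
        also have "\<dots> = BD K (2^l) (\<lambda>c. ev (\<lambda>f. f c) (Obl Or l q) (2^l) ws)" by (rule conj_unconj[OF Pu BDc])
        finally show ?thesis .
      qed
      also have "\<dots> = Wop N m l (\<lambda>y. Gop l (alg l q (U y) Or k) (\<gamma> y))"
        unfolding BDeq unfolding K_def by (rule Wop_BD[symmetric]) (rule Gc)
      finally have main: "circ D q V Q Or (nq gw) = Wop N m l (\<lambda>y. Gop l (alg l q (U y) Or k) (\<gamma> y))" .
      have cc: "circ D q V Q Or (nq gw) \<in> carrier_mat D D"
        by (rule circ_carrier) (use V Q Orc dvd unitary_carrier in auto)
      show "circ (N * 2^m * 2^l * 2^0) q V Q Or (nq gw) * kron (1\<^sub>m (N * 2^m * 2^l)) (ket0 (2^0))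
          = kron (Wop N m l (\<lambda>y. Gop l (alg l q (U y) Or k) (\<gamma> y))) (ket0 (2^0))"
      proof -
        have k1: "kron A (ket0 (2^0)) = A" for A by (simp only: power_0 kron_ket0_1)
        have "circ D q V Q Or (nq gw) * 1\<^sub>m D = circ D q V Q Or (nq gw)" using cc by simp
        then show ?thesis using main unfolding k1 D_def by simp
      qed
    qed
  qed
qed

end
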